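(* For every $k\ge2$, $\mathcal A_k\subseteq\mathcal A_{k+1}$ and $\mathcal A_k\subseteq\mathcal A$; that is, $(\mathcal A_k)_k$ is a nested sequence of subsets of $\mathcal A$.
   Context: $d\ge2$; $\mathcal S_{d-1}=\{(w_1,\dots,w_{d-1})\in[0,1]^{d-1}:\sum w_i\le1\}$, $w_d=1-\sum_{i<d}w_i$. $\mathcal A$ is the family of convex functions $A:\mathcal S_{d-1}\to[1/d,1]$ with $\max(w_1,\dots,w_d)\le A({\boldsymbol w})\le1$ for all ${\boldsymbol w}$. $\Gamma_k$ is the set of ${\boldsymbol\alpha}\in\{0,\dots,k\}^{d-1}$ with $\sum\alpha_i\le k$, $\alpha_d=k-\sum_{i<d}\alpha_i$, and $b_{\boldsymbol\alpha}({\boldsymbol w};k)=\frac{k!}{\alpha_1!\cdots\alpha_d!}\prod_{i=1}^dw_i^{\alpha_i}$. Let ${\boldsymbol v}_0={\bf 0}$, ${\boldsymbol v}_r={\boldsymbol e}_r\in\mathbb R^{d-1}$. For coefficients $(\beta_{\boldsymbol\alpha})_{{\boldsymbol\alpha}\in\Gamma_k}$ define $\Delta_{s,r}\beta_{\boldsymbol\alpha}=\beta_{{\boldsymbol\alpha}+{\boldsymbol v}_s}-\beta_{{\boldsymbol\alpha}+{\boldsymbol v}_r}$ and $\Delta_{t,r}\Delta_{s,r}\beta_{\boldsymbol\alpha}=\Delta_{s,r}\beta_{{\boldsymbol\alpha}+{\boldsymbol v}_t}-\Delta_{s,r}\beta_{{\boldsymbol\alpha}+{\boldsymbol v}_r}$.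 $\mathcal A_k$ is the set of functions ${\boldsymbol w}\mapsto\sum_{{\boldsymbol\alpha}\in\Gamma_k}\beta_{\boldsymbol\alpha}b_{\boldsymbol\alpha}({\boldsymbol w};k)$ with all $\beta_{\boldsymbol\alpha}\in[0,1]$ satisfying: (R1) for all ${\boldsymbol\alpha}\in\Gamma_{k-2}$ and $i\in\{1,\dots,d-1\}$: $\Delta^2_{i,0}\beta_{\boldsymbol\alpha}-\sum_{j\in\{1,\dots,d-1\},j\ne i}|\Delta_{i,0}\Delta_{j,0}\beta_{\boldsymbol\alpha}|\ge0$; (R2) $\beta_{\boldsymbol\alpha}=1$ for ${\boldsymbol\alpha}={\bf 0}$ and for ${\boldsymbol\alpha}=k{\boldsymbol e}_i$, $i=1,\dots,d-1$; (R3) $\beta_{\boldsymbol\alpha}\ge1-1/k$ for ${\boldsymbol\alpha}={\boldsymbol e}_i$, ${\boldsymbol\alpha}=(k-1){\boldsymbol e}_i$, and ${\boldsymbol\alpha}=(k-1){\boldsymbol e}_i+{\boldsymbol e}_j$, for all $i\ne j$ in $\{1,\dots,d-1\}$. *)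

theory Defs
  imports "HOL-Analysis.Analysis"
begin

text \<open>Dimension convention: the free coordinates w_1,...,w_{d-1} are indexed by a finite
type 'n, so d - 1 = CARD('n) and d = CARD('n) + 1 \<ge> 2 automatically.
Vectors w live in real^'n; w_d = 1 - sum of the coordinates.\<close>

definition unit_simplex :: "(real^'n) set" where
  "unit_simplex = {w. (\<forall>i. 0 \<le> w$i) \<and> (\<Sum>i\<in>UNIV. w$i) \<le> 1}"

definition wlast :: "real^'n \<Rightarrow> real" where
  "wlast w = 1 - (\<Sum>i\<in>UNIV. w$i)"

definition maxcoord :: "real^'n \<Rightarrow> real" where
  "maxcoord w = max (Max (range (\<lambda>i. w$i))) (wlast w)"

definition pickA :: "(real^'n \<Rightarrow> real) set" where
  "pickA = {A. convex_on unit_simplex A \<and>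
     (\<forall>w\<in>unit_simplex. 1 / real (CARD('n) + 1) \<le> A w \<and> maxcoord w \<le> A w \<and> A w \<le> 1)}"

text \<open>Multi-indices alpha in Gamma_k (first d-1 components; alpha_d = k - sum).\<close>
definition Gamma :: "nat \<Rightarrow> ('n::finite \<Rightarrow> nat) set" where
  "Gamma k = {\<alpha>. (\<Sum>i\<in>UNIV. \<alpha> i) \<le> k}"

definition ev :: "'n \<Rightarrow> 'n \<Rightarrow> nat" where
  "ev i = (\<lambda>j. if j = i then 1 else 0)"

definition bern :: "nat \<Rightarrow> ('n::finite \<Rightarrow> nat) \<Rightarrow> real^'n \<Rightarrow> real" where
  "bern k \<alpha> w =
     fact k / ((\<Prod>i\<in>UNIV. fact (\<alpha> i)) * fact (k - (\<Sum>i\<in>UNIV. \<alpha> i)))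
     * (\<Prod>i\<in>UNIV. (w$i) ^ (\<alpha> i)) * (wlast w) ^ (k - (\<Sum>i\<in>UNIV. \<alpha> i))"

definition D1 :: "(('n \<Rightarrow> nat) \<Rightarrow> real) \<Rightarrow> 'n \<Rightarrow> ('n \<Rightarrow> nat) \<Rightarrow> real" where
  "D1 \<beta> i \<alpha> = \<beta> (\<lambda>j. \<alpha> j + ev i j) - \<beta> \<alpha>"

definition D2 :: "(('n \<Rightarrow> nat) \<Rightarrow> real) \<Rightarrow> 'n \<Rightarrow> 'n \<Rightarrow> ('n \<Rightarrow> nat) \<Rightarrow> real" where
  "D2 \<beta> t s \<alpha> = D1 \<beta> s (\<lambda>j. \<alpha> j + ev t j) - D1 \<beta> s \<alpha>"

definition admissible :: "nat \<Rightarrow> (('n::finite \<Rightarrow> nat) \<Rightarrow> real) \<Rightarrow> bool" where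
  "admissible k \<beta> \<longleftrightarrow>
     (\<forall>\<alpha>\<in>Gamma k. 0 \<le> \<beta> \<alpha> \<and> \<beta> \<alpha> \<le> 1) \<and>
     \<comment> \<open>R1\<close>
     (\<forall>\<alpha>\<in>Gamma (k - 2). \<forall>i. D2 \<beta> i i \<alpha> - (\<Sum>j\<in>UNIV - {i}. \<bar>D2 \<beta> i j \<alpha>\<bar>) \<ge> 0) \<and>
     \<comment> \<open>R2\<close>
     \<beta> (\<lambda>j. 0) = 1 \<and> (\<forall>i. \<beta> (\<lambda>j. k * ev i j) = 1) \<and>
     \<comment> \<open>R3\<close>
     (\<forall>i. \<beta> (ev i) \<ge> 1 - 1 / real k \<and> \<beta> (\<lambda>j. (k - 1) * ev i j) \<ge> 1 - 1 / real k) \<and>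
     (\<forall>i j. i \<noteq> j \<longrightarrow> \<beta> (\<lambda>l. (k - 1) * ev i l + ev j l) \<ge> 1 - 1 / real k)"

text \<open>The family \<A>_k (functions identified through their values on the simplex).\<close>
definition Ak :: "nat \<Rightarrow> (real^'n::finite \<Rightarrow> real) set" where
  "Ak k = {A. \<exists>\<beta>. admissible k \<beta> \<and>
              (\<forall>w\<in>unit_simplex. A w = (\<Sum>\<alpha>\<in>Gamma k. \<beta> \<alpha> * bern k \<alpha> w))}"

end

theory Submission
  imports Defs
begin

definition shift :: "'n \<Rightarrow> ('n \<Rightarrow> nat) \<Rightarrow> ('n \<Rightarrow> nat)" where
  "shift i \<alpha> = (\<lambda>j. \<alpha> j + ev i j)"
definition unsh :: "'n \<Rightarrow> ('n \<Rightarrow> nat) \<Rightarrow> ('n \<Rightarrow> nat)" where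
  "unsh i \<alpha> = (\<lambda>j. \<alpha> j - ev i j)"
definition sz :: "('n::finite \<Rightarrow> nat) \<Rightarrow> nat" where
  "sz \<alpha> = (\<Sum>i\<in>UNIV. \<alpha> i)"
definition mono :: "('n::finite \<Rightarrow> nat) \<Rightarrow> real^'n \<Rightarrow> real" where
  "mono \<alpha> w = (\<Prod>i\<in>UNIV. (w$i) ^ (\<alpha> i))"
definition coef :: "nat \<Rightarrow> ('n::finite \<Rightarrow> nat) \<Rightarrow> real" where
  "coef k \<alpha> = fact k / ((\<Prod>i\<in>UNIV. fact (\<alpha> i)) * fact (k - sz \<alpha>))"
definition BB :: "nat \<Rightarrow> (('n::finite \<Rightarrow> nat) \<Rightarrow> real) \<Rightarrow> real^'n \<Rightarrow> real" where
  "BB k \<beta> w = (\<Sum>\<alpha>\<in>Gamma k. \<beta> \<alpha> * bern k \<alpha> w)"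

lemma bern_eq: "bern k \<alpha> w = coef k \<alpha> * mono \<alpha> w * wlast w ^ (k - sz \<alpha>)"
  by (simp add: bern_def coef_def mono_def sz_def)

lemma Gamma_iff: "\<alpha> \<in> Gamma k \<longleftrightarrow> sz \<alpha> \<le> k"
  by (simp add: Gamma_def sz_def)

lemma finite_Gamma: "finite (Gamma k :: ('n::finite \<Rightarrow> nat) set)"
proof -
  have "Gamma k \<subseteq> Pi\<^sub>E UNIV (\<lambda>_::'n. {..k})"
  proof
    fix \<alpha> :: "'n \<Rightarrow> nat" assume "\<alpha> \<in> Gamma k"
    then have "sz \<alpha> \<le> k" by (simp add: Gamma_iff)
    moreover have "\<alpha> i \<le> sz \<alpha>" for i unfolding sz_def
      by (rule member_le_sum) auto
    ultimately show "\<alpha> \<in> Pi\<^sub>E UNIV (\<lambda>_. {..k})" by (auto simp: PiE_UNIV_domain intro: le_trans)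
  qed
  then show ?thesis by (rule finite_subset) (simp add: finite_PiE)
qed

lemma sz_shift[simp]: "sz (shift i \<alpha>) = Suc (sz \<alpha>)"
  by (simp add: sz_def shift_def ev_def sum.distrib)

lemma unsh_shift[simp]: "unsh i (shift i \<alpha>) = \<alpha>"
  by (simp add: unsh_def shift_def)

lemma shift_unsh: "\<alpha> i \<noteq> 0 \<Longrightarrow> shift i (unsh i \<alpha>) = \<alpha>"
  by (auto simp: unsh_def shift_def ev_def fun_eq_iff)

lemma shift_i[simp]: "shift i \<alpha> i = Suc (\<alpha> i)"
  by (simp add: shift_def ev_def)

lemma inj_shift: "inj (shift i)"
  by (rule inj_on_inverseI[where g="unsh i"]) simp

lemma reindex1:
  fixes h :: "('n::finite \<Rightarrow> nat) \<Rightarrow> real"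
  shows "(\<Sum>\<gamma>\<in>Gamma (Suc k). real (\<gamma> i) * h \<gamma>) = (\<Sum>\<alpha>\<in>Gamma k. real (Suc (\<alpha> i)) * h (shift i \<alpha>))"
proof -
  have "(\<Sum>\<gamma>\<in>Gamma (Suc k). real (\<gamma> i) * h \<gamma>) = (\<Sum>\<gamma>\<in>shift i ` Gamma k. real (\<gamma> i) * h \<gamma>)"
  proof (rule sum.mono_neutral_right)
    show "finite (Gamma (Suc k))" by (rule finite_Gamma)
    show "shift i ` Gamma k \<subseteq> Gamma (Suc k)" by (auto simp: Gamma_iff)
    show "\<forall>\<gamma>\<in>Gamma (Suc k) - shift i ` Gamma k. real (\<gamma> i) * h \<gamma> = 0"
    proof
      fix \<gamma> assume g: "\<gamma> \<in> Gamma (Suc k) - shift i ` Gamma k"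
      show "real (\<gamma> i) * h \<gamma> = 0"
      proof (cases "\<gamma> i = 0")
        case False
        then have "\<gamma> = shift i (unsh i \<gamma>)" by (simp add: shift_unsh)
        moreover have "sz (unsh i \<gamma>) \<le> k" using g False
          by (metis Diff_iff Gamma_iff Suc_le_mono calculation sz_shift)
        ultimately show ?thesis using g by (metis Diff_iff Gamma_iff image_eqI)
      qed simp
    qed
  qed
  also have "\<dots> = (\<Sum>\<alpha>\<in>Gamma k. real (Suc (\<alpha> i)) * h (shift i \<alpha>))"
    by (subst sum.reindex) (auto intro: inj_on_subset[OF inj_shift])
  finally show ?thesis .
qed

lemma reindex2:
  fixes h :: "('n::finite \<Rightarrow> nat) \<Rightarrow> real"
  shows "(\<Sum>\<gamma>\<in>Gamma (Suc k). real (Suc k - sz \<gamma>) * h \<gamma>) = (\<Sum>\<alpha>\<in>Gamma k. real (Suc k - sz \<alpha>) * h \<alpha>)"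
proof (rule sum.mono_neutral_right)
  show "\<forall>\<gamma>\<in>Gamma (Suc k) - Gamma k. real (Suc k - sz \<gamma>) * h \<gamma> = 0"
  proof
    fix \<gamma> :: "'n \<Rightarrow> nat" assume "\<gamma> \<in> Gamma (Suc k) - Gamma k"
    then have "sz \<gamma> = Suc k" by (auto simp: Gamma_iff)
    then show "real (Suc k - sz \<gamma>) * h \<gamma> = 0" by simp
  qed
qed (auto simp: finite_Gamma Gamma_iff)

lemma prod_fact_shift: "(\<Prod>j\<in>UNIV. fact (shift i (\<alpha>::'n::finite\<Rightarrow>nat) j) :: real) = real (Suc (\<alpha> i)) * (\<Prod>j\<in>UNIV. fact (\<alpha> j))"
proof -
  have "(\<Prod>j\<in>UNIV. fact (shift i \<alpha> j) :: real) = (\<Prod>j\<in>UNIV. (if j = i then real (Suc (\<alpha> i)) else 1) * fact (\<alpha> j))"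
    by (rule prod.cong) (auto simp: shift_def ev_def)
  also have "\<dots> = real (Suc (\<alpha> i)) * (\<Prod>j\<in>UNIV. fact (\<alpha> j))"
    by (simp add: prod.distrib prod.delta[of UNIV i "\<lambda>_. real (Suc (\<alpha> i))", simplified])
  finally show ?thesis .
qed

lemma prod_fact_nz: "(\<Prod>j\<in>UNIV. fact ((\<alpha>::'n::finite\<Rightarrow>nat) j) :: real) \<noteq> 0"
  by (simp add: prod_zero_iff)

lemma coef_shift: "sz \<alpha> \<le> k \<Longrightarrow> coef (Suc k) (shift i \<alpha>) * real (Suc (\<alpha> i)) = real (Suc k) * coef k \<alpha>"
  unfolding coef_def using prod_fact_nz[of \<alpha>]
  by (simp add: prod_fact_shift fact_Suc[of k] del: of_nat_Suc fact_Suc)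

lemma coef_same: "sz \<alpha> \<le> k \<Longrightarrow> coef (Suc k) \<alpha> * real (Suc k - sz \<alpha>) = real (Suc k) * coef k \<alpha>"
  unfolding coef_def
  using prod_fact_nz[of \<alpha>]
  by (simp add: Suc_diff_le fact_Suc[of k] fact_Suc[of "k - sz \<alpha>"] del: of_nat_Suc fact_Suc)

lemma mono_shift: "mono (shift i \<alpha>) w = w$i * mono \<alpha> w"
proof -
  have "mono (shift i \<alpha>) w = (\<Prod>j\<in>UNIV. (if j = i then w$i else 1) * (w$j)^(\<alpha> j))"
    unfolding mono_def by (rule prod.cong) (auto simp: shift_def ev_def)
  then show ?thesis by (simp add: prod.distrib mono_def)
qed

lemma bern_up1: "sz \<alpha> \<le> k \<Longrightarrow>
  real (Suc k) * (w$i * bern k \<alpha> w) = real (Suc (\<alpha> i)) * bern (Suc k) (shift i \<alpha>) w"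
proof -
  assume a: "sz \<alpha> \<le> k"
  have "real (Suc (\<alpha> i)) * bern (Suc k) (shift i \<alpha>) w
     = (coef (Suc k) (shift i \<alpha>) * real (Suc (\<alpha> i))) * (w$i * mono \<alpha> w) * wlast w ^ (k - sz \<alpha>)"
    by (simp add: bern_eq mono_shift)
  also have "\<dots> = real (Suc k) * (w$i * bern k \<alpha> w)"
    by (simp only: coef_shift[OF a]) (simp add: bern_eq)
  finally show ?thesis by simp
qed

lemma bern_up2: "sz \<alpha> \<le> k \<Longrightarrow>
  real (Suc k) * (wlast w * bern k \<alpha> w) = real (Suc k - sz \<alpha>) * bern (Suc k) \<alpha> w"
proof -
  assume a: "sz \<alpha> \<le> k"
  have "real (Suc k - sz \<alpha>) * bern (Suc k) \<alpha> w
     = (coef (Suc k) \<alpha> * real (Suc k - sz \<alpha>)) * mono \<alpha> w * (wlast w * wlast w ^ (k - sz \<alpha>))"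
    using a by (simp add: bern_eq Suc_diff_le)
  also have "\<dots> = real (Suc k) * (wlast w * bern k \<alpha> w)"
    by (simp only: coef_same[OF a]) (simp add: bern_eq)
  finally show ?thesis by simp
qed

lemma sum_w_wlast: "(\<Sum>i\<in>UNIV. w$i) + wlast w = 1"
  by (simp add: wlast_def)

definition elev :: "nat \<Rightarrow> (('n::finite \<Rightarrow> nat) \<Rightarrow> real) \<Rightarrow> ('n \<Rightarrow> nat) \<Rightarrow> real" where
  "elev k \<beta> \<alpha> = ((\<Sum>i\<in>UNIV. real (\<alpha> i) * \<beta> (unsh i \<alpha>)) + (real (Suc k) - real (sz \<alpha>)) * \<beta> \<alpha>) / real (Suc k)"

lemma BB_elev: "BB k \<beta> w = BB (Suc k) (elev k \<beta>) w"
proof -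
  have "real (Suc k) * BB k \<beta> w = (\<Sum>\<alpha>\<in>Gamma k. \<beta> \<alpha> * (real (Suc k) * ((\<Sum>i\<in>UNIV. w$i) + wlast w) * bern k \<alpha> w))"
    by (simp add: BB_def sum_w_wlast sum_distrib_left mult_ac)
  also have "\<dots> = (\<Sum>\<alpha>\<in>Gamma k. (\<Sum>i\<in>UNIV. \<beta> \<alpha> * (real (Suc k) * (w$i * bern k \<alpha> w)))
        + \<beta> \<alpha> * (real (Suc k) * (wlast w * bern k \<alpha> w)))"
    by (simp add: algebra_simps sum_distrib_left sum_distrib_right)
  also have "\<dots> = (\<Sum>\<alpha>\<in>Gamma k. (\<Sum>i\<in>UNIV. real (Suc (\<alpha> i)) * (\<beta> (unsh i (shift i \<alpha>)) * bern (Suc k) (shift i \<alpha>) w))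
        + real (Suc k - sz \<alpha>) * (\<beta> \<alpha> * bern (Suc k) \<alpha> w))"
  proof (rule sum.cong[OF refl])
    fix \<alpha> :: "'a \<Rightarrow> nat" assume "\<alpha> \<in> Gamma k"
    then have a: "sz \<alpha> \<le> k" by (simp add: Gamma_iff)
    have h1: "\<beta> \<alpha> * (real (Suc k) * (w$i * bern k \<alpha> w)) = real (Suc (\<alpha> i)) * (\<beta> (unsh i (shift i \<alpha>)) * bern (Suc k) (shift i \<alpha>) w)" for i
      using bern_up1[OF a, of w i] by (simp only: unsh_shift mult.left_commute)
    have h2: "\<beta> \<alpha> * (real (Suc k) * (wlast w * bern k \<alpha> w)) = real (Suc k - sz \<alpha>) * (\<beta> \<alpha> * bern (Suc k) \<alpha> w)"
      using bern_up2[OF a, of w] by (simp only: mult.left_commute)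
    show "(\<Sum>i\<in>UNIV. \<beta> \<alpha> * (real (Suc k) * (w$i * bern k \<alpha> w))) + \<beta> \<alpha> * (real (Suc k) * (wlast w * bern k \<alpha> w))
      = (\<Sum>i\<in>UNIV. real (Suc (\<alpha> i)) * (\<beta> (unsh i (shift i \<alpha>)) * bern (Suc k) (shift i \<alpha>) w))
        + real (Suc k - sz \<alpha>) * (\<beta> \<alpha> * bern (Suc k) \<alpha> w)"
      by (simp only: h1 h2)
  qed
  also have "\<dots> = (\<Sum>i\<in>UNIV. \<Sum>\<alpha>\<in>Gamma k. real (Suc (\<alpha> i)) * (\<beta> (unsh i (shift i \<alpha>)) * bern (Suc k) (shift i \<alpha>) w))
        + (\<Sum>\<alpha>\<in>Gamma k. real (Suc k - sz \<alpha>) * (\<beta> \<alpha> * bern (Suc k) \<alpha> w))"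
    by (simp add: sum.distrib sum.swap[of _ "Gamma k"])
  also have "\<dots> = (\<Sum>i\<in>UNIV. \<Sum>\<gamma>\<in>Gamma (Suc k). real (\<gamma> i) * (\<beta> (unsh i \<gamma>) * bern (Suc k) \<gamma> w))
        + (\<Sum>\<gamma>\<in>Gamma (Suc k). real (Suc k - sz \<gamma>) * (\<beta> \<gamma> * bern (Suc k) \<gamma> w))"
    by (simp only: reindex1 reindex2)
  also have "\<dots> = (\<Sum>\<gamma>\<in>Gamma (Suc k). ((\<Sum>i\<in>UNIV. real (\<gamma> i) * \<beta> (unsh i \<gamma>)) + real (Suc k - sz \<gamma>) * \<beta> \<gamma>) * bern (Suc k) \<gamma> w)"
    by (simp add: sum.distrib sum.swap[of _ "Gamma (Suc k)"] algebra_simps sum_distrib_left sum_distrib_right)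
  also have "\<dots> = real (Suc k) * BB (Suc k) (elev k \<beta>) w"
    unfolding BB_def elev_def sum_distrib_left
    by (rule sum.cong) (auto simp: Gamma_iff of_nat_diff)
  finally show ?thesis by simp
qed

definition EE :: "real \<Rightarrow> (('n::finite \<Rightarrow> nat) \<Rightarrow> real) \<Rightarrow> ('n \<Rightarrow> nat) \<Rightarrow> real" where
  "EE K \<beta> \<alpha> = (\<Sum>i\<in>UNIV. real (\<alpha> i) * \<beta> (unsh i \<alpha>)) + (K - real (sz \<alpha>)) * \<beta> \<alpha>"

lemma elev_EE: "elev k \<beta> \<alpha> = EE (real (Suc k)) \<beta> \<alpha> / real (Suc k)"
  by (simp add: elev_def EE_def)

lemma D1_shift: "D1 \<beta> i \<alpha> = \<beta> (shift i \<alpha>) - \<beta> \<alpha>"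
  by (simp add: D1_def shift_def)

lemma D2_D1: "D2 \<beta> t s = D1 (D1 \<beta> s) t"
  by (simp add: D2_def D1_def fun_eq_iff)

lemma term_shift: "real (shift i \<alpha> m) * \<beta> (unsh m (shift i \<alpha>))
   = real (\<alpha> m) * \<beta> (shift i (unsh m \<alpha>)) + (if m = i then \<beta> \<alpha> else 0)"
proof (cases "m = i")
  case True
  then show ?thesis
  proof (cases "\<alpha> i = 0")
    case False
    then show ?thesis using True by (simp add: shift_unsh algebra_simps)
  qed (simp)
next
  case False
  then have "unsh m (shift i \<alpha>) = shift i (unsh m \<alpha>)"
    by (auto simp: unsh_def shift_def ev_def fun_eq_iff)
  moreover have "shift i \<alpha> m = \<alpha> m" using False by (simp add: shift_def ev_def)
  ultimately show ?thesis using False by simp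
qed

lemma D1_EE: "D1 (EE K \<beta>) i \<alpha> = EE (K - 1) (D1 \<beta> i) \<alpha>"
proof -
  have "(\<Sum>m\<in>UNIV. real (shift i \<alpha> m) * \<beta> (unsh m (shift i \<alpha>)))
      = (\<Sum>m\<in>UNIV. real (\<alpha> m) * \<beta> (shift i (unsh m \<alpha>))) + \<beta> \<alpha>"
    by (simp add: term_shift sum.distrib)
  then show ?thesis
    by (simp add: D1_shift EE_def algebra_simps sum_subtractf)
qed

lemma D1_EE_fun: "D1 (EE K \<beta>) i = EE (K - 1) (D1 \<beta> i)"
  by (simp add: fun_eq_iff D1_EE)

lemma D2_EE: "D2 (EE K \<beta>) t s \<alpha> = EE (K - 2) (D2 \<beta> t s) \<alpha>"
  by (simp add: D2_D1 D1_EE_fun D1_EE)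

lemma D2_elev: "D2 (elev k \<beta>) t s \<alpha> = EE (real (Suc k) - 2) (D2 \<beta> t s) \<alpha> / real (Suc k)"
proof -
  have "elev k \<beta> = (\<lambda>a. EE (real (Suc k)) \<beta> a / real (Suc k))" by (simp add: fun_eq_iff elev_EE)
  moreover have "D2 (\<lambda>a. f a / c) t s \<alpha> = D2 f t s \<alpha> / c" for f :: "('a \<Rightarrow> nat) \<Rightarrow> real" and c
    by (simp add: D2_def D1_def diff_divide_distrib)
  ultimately show ?thesis by (simp only: D2_EE)
qed

lemma sz_unsh: "\<alpha> m \<noteq> 0 \<Longrightarrow> Suc (sz (unsh m \<alpha>)) = sz \<alpha>"
  by (metis shift_unsh sz_shift)

lemma EE_mono:
  assumes "\<And>a. a \<in> Gamma n \<Longrightarrow> f a \<le> g a" and "\<alpha> \<in> Gamma (Suc n)"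
  shows "EE (real (Suc n)) f \<alpha> \<le> EE (real (Suc n)) g \<alpha>"
  unfolding EE_def
proof (rule add_mono)
  show "(\<Sum>i\<in>UNIV. real (\<alpha> i) * f (unsh i \<alpha>)) \<le> (\<Sum>i\<in>UNIV. real (\<alpha> i) * g (unsh i \<alpha>))"
  proof (rule sum_mono)
    fix i
    show "real (\<alpha> i) * f (unsh i \<alpha>) \<le> real (\<alpha> i) * g (unsh i \<alpha>)"
    proof (cases "\<alpha> i = 0")
      case False
      then have "unsh i \<alpha> \<in> Gamma n" using assms(2) sz_unsh[of \<alpha> i, OF False] by (simp add: Gamma_iff)
      then show ?thesis by (simp add: assms(1) mult_left_mono)
    qed simp
  qed
  show "(real (Suc n) - real (sz \<alpha>)) * f \<alpha> \<le> (real (Suc n) - real (sz \<alpha>)) * g \<alpha>"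
  proof (cases "sz \<alpha> = Suc n")
    case False
    then have "\<alpha> \<in> Gamma n" "real (sz \<alpha>) \<le> real (Suc n)" using assms(2) by (auto simp: Gamma_iff)
    then show ?thesis by (simp add: assms(1) mult_left_mono)
  qed simp
qed

lemma EE_const: "EE K (\<lambda>_. c) \<alpha> = c * K"
  by (simp add: EE_def sz_def algebra_simps sum_distrib_left flip: sum_distrib_right)

lemma EE_linear: "EE K (\<lambda>a. f a - (\<Sum>j\<in>J. g j a)) \<alpha> = EE K f \<alpha> - (\<Sum>j\<in>J. EE K (g j) \<alpha>)"
  by (simp add: EE_def algebra_simps sum_subtractf sum_distrib_left sum_distrib_right sum.distrib sum.swap[of _ J])

lemma EE_abs:
  assumes "real (sz \<alpha>) \<le> K"
  shows "\<bar>EE K f \<alpha>\<bar> \<le> EE K (\<lambda>a. \<bar>f a\<bar>) \<alpha>"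
proof -
  have "\<bar>EE K f \<alpha>\<bar> \<le> \<bar>\<Sum>i\<in>UNIV. real (\<alpha> i) * f (unsh i \<alpha>)\<bar> + \<bar>(K - real (sz \<alpha>)) * f \<alpha>\<bar>"
    unfolding EE_def by (rule abs_triangle_ineq)
  also have "\<dots> \<le> (\<Sum>i\<in>UNIV. \<bar>real (\<alpha> i) * f (unsh i \<alpha>)\<bar>) + \<bar>(K - real (sz \<alpha>)) * f \<alpha>\<bar>"
    by (simp add: sum_abs)
  also have "\<dots> = EE K (\<lambda>a. \<bar>f a\<bar>) \<alpha>"
    using assms by (simp add: EE_def abs_mult)
  finally show ?thesis .
qed

lemma sum_ev: "(\<Sum>m\<in>UNIV. real (c * ev (i::'n::finite) m) * X m) = real c * (X i :: real)"
proof -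
  have "(\<Sum>m\<in>UNIV. real (c * ev i m) * X m) = (\<Sum>m\<in>UNIV. if m = i then real c * X i else 0)"
    by (rule sum.cong) (simp_all add: ev_def)
  also have "\<dots> = real c * X i" by (simp add: sum.delta)
  finally show ?thesis .
qed

lemma sum_ev1: "(\<Sum>m\<in>UNIV. real (ev (i::'n::finite) m) * X m) = (X i :: real)"
  using sum_ev[of 1 i X] by simp

lemma sum_ev2: "(\<Sum>m\<in>UNIV. real (c * ev (i::'n::finite) m + ev j m) * X m) = real c * X i + (X j :: real)"
  by (simp only: of_nat_add distrib_right sum.distrib sum_ev sum_ev1)

lemma sz_cev: "sz (\<lambda>j. c * ev i j) = c"
proof -
  have "real (sz (\<lambda>j. c * ev i j)) = (\<Sum>m\<in>UNIV. real (c * ev i m) * 1)"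
    by (simp add: sz_def)
  then show ?thesis by (simp only: sum_ev)
qed

lemma sz_ev: "sz (ev i) = 1"
  using sz_cev[of 1 i] by simp

lemma sz_cev2: "sz (\<lambda>l. c * ev i l + ev j l) = Suc c"
  using sz_cev[of c i] sz_ev[of j] by (simp add: sz_def sum.distrib)

lemma EE_zero: "EE K (\<lambda>_. 0) \<alpha> = 0"
  using EE_const[of K 0] by simp

lemma unsh_c: "unsh i (\<lambda>l. c * ev i l) = (\<lambda>l. (c - 1) * ev i l)"
  by (auto simp: fun_eq_iff unsh_def ev_def)
lemma unsh_1: "unsh i (ev i) = (\<lambda>l. 0)"
  by (auto simp: fun_eq_iff unsh_def ev_def)
lemma unsh_c2: "i \<noteq> j \<Longrightarrow> unsh i (\<lambda>l. c * ev i l + ev j l) = (\<lambda>l. (c - 1) * ev i l + ev j l)"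
  by (auto simp: fun_eq_iff unsh_def ev_def)
lemma unsh_c2': "i \<noteq> j \<Longrightarrow> unsh j (\<lambda>l. c * ev i l + ev j l) = (\<lambda>l. c * ev i l)"
  by (auto simp: fun_eq_iff unsh_def ev_def)

lemma ineq_aux: "real k > 0 \<Longrightarrow> b \<ge> 1 - 1 / real k \<Longrightarrow> (1 + real k * b) / (real k + 1) \<ge> 1 - 1 / (real k + 1)"
proof -
  assume k: "real k > 0" and b: "b \<ge> 1 - 1 / real k"
  have "real k * b \<ge> real k * (1 - 1 / real k)" using b k by (simp add: mult_left_mono)
  then have h: "real k * b \<ge> real k - 1" using k by (simp add: algebra_simps)
  have "1 - 1 / (real k + 1) = real k / (real k + 1)" using k by (simp add: field_simps)
  also have "\<dots> \<le> (1 + real k * b) / (real k + 1)" using h k by (simp add: divide_right_mono)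
  finally show ?thesis .
qed

lemma admissible_elev:
  assumes k: "k \<ge> 2" and adm: "admissible k \<beta>"
  shows "admissible (Suc k) (elev k \<beta>)"
proof -
  have b01: "\<And>a. a \<in> Gamma k \<Longrightarrow> 0 \<le> \<beta> a \<and> \<beta> a \<le> 1" using adm by (simp add: admissible_def)
  have R1: "\<And>a i. a \<in> Gamma (k - 2) \<Longrightarrow> D2 \<beta> i i a - (\<Sum>j\<in>UNIV - {i}. \<bar>D2 \<beta> i j a\<bar>) \<ge> 0"
    using adm by (simp add: admissible_def)
  have R2a: "\<beta> (\<lambda>j. 0) = 1" and R2b: "\<And>i. \<beta> (\<lambda>j. k * ev i j) = 1"
    using adm by (simp_all add: admissible_def)
  have R3a: "\<And>i. \<beta> (ev i) \<ge> 1 - 1 / real k" and R3b: "\<And>i. \<beta> (\<lambda>j. (k - 1) * ev i j) \<ge> 1 - 1 / real k"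
    and R3c: "\<And>i j. i \<noteq> j \<Longrightarrow> \<beta> (\<lambda>l. (k - 1) * ev i l + ev j l) \<ge> 1 - 1 / real k"
    using adm by (simp_all add: admissible_def)
  have kpos: "real k > 0" using k by simp
  have P1: "\<forall>\<alpha>\<in>Gamma (Suc k). 0 \<le> elev k \<beta> \<alpha> \<and> elev k \<beta> \<alpha> \<le> 1"
  proof
    fix \<alpha> :: "'a \<Rightarrow> nat" assume a: "\<alpha> \<in> Gamma (Suc k)"
    have "EE (real (Suc k)) (\<lambda>_. 0) \<alpha> \<le> EE (real (Suc k)) \<beta> \<alpha>"
      by (rule EE_mono[OF _ a]) (simp add: b01)
    moreover have "EE (real (Suc k)) \<beta> \<alpha> \<le> EE (real (Suc k)) (\<lambda>_. 1) \<alpha>"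
      by (rule EE_mono[OF _ a]) (simp add: b01)
    ultimately show "0 \<le> elev k \<beta> \<alpha> \<and> elev k \<beta> \<alpha> \<le> 1"
      by (simp add: elev_EE EE_zero EE_const del: of_nat_Suc)
  qed
  have P2: "\<forall>\<alpha>\<in>Gamma (Suc k - 2). \<forall>i. D2 (elev k \<beta>) i i \<alpha> - (\<Sum>j\<in>UNIV - {i}. \<bar>D2 (elev k \<beta>) i j \<alpha>\<bar>) \<ge> 0"
  proof (intro ballI allI)
    fix \<alpha> :: "'a \<Rightarrow> nat" and i assume a: "\<alpha> \<in> Gamma (Suc k - 2)"
    define n where "n = k - 2"
    have Kn: "real (Suc k) - 2 = real (Suc n)" and a': "\<alpha> \<in> Gamma (Suc n)"
    proof -
      show "real (Suc k) - 2 = real (Suc n)" using k by (simp add: n_def of_nat_diff)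
      have "Suc k - 2 = Suc n" using k by (simp add: n_def)
      then show "\<alpha> \<in> Gamma (Suc n)" using a by simp
    qed
    have szK: "real (sz \<alpha>) \<le> real (Suc n)" using a' by (simp add: Gamma_iff)
    let ?K = "real (Suc n)"
    have "0 = EE ?K (\<lambda>_. 0) \<alpha>" by (simp add: EE_zero)
    also have "\<dots> \<le> EE ?K (\<lambda>a. D2 \<beta> i i a - (\<Sum>j\<in>UNIV - {i}. \<bar>D2 \<beta> i j a\<bar>)) \<alpha>"
      by (rule EE_mono[OF _ a']) (use R1 in \<open>simp add: n_def\<close>)
    also have "\<dots> = EE ?K (D2 \<beta> i i) \<alpha> - (\<Sum>j\<in>UNIV - {i}. EE ?K (\<lambda>a. \<bar>D2 \<beta> i j a\<bar>) \<alpha>)"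
      by (rule EE_linear)
    also have "\<dots> \<le> EE ?K (D2 \<beta> i i) \<alpha> - (\<Sum>j\<in>UNIV - {i}. \<bar>EE ?K (D2 \<beta> i j) \<alpha>\<bar>)"
      using EE_abs[OF szK] by (intro diff_left_mono sum_mono) auto
    finally have "0 \<le> (EE ?K (D2 \<beta> i i) \<alpha> - (\<Sum>j\<in>UNIV - {i}. \<bar>EE ?K (D2 \<beta> i j) \<alpha>\<bar>)) / real (Suc k)"
      by simp
    also have "\<dots> = D2 (elev k \<beta>) i i \<alpha> - (\<Sum>j\<in>UNIV - {i}. \<bar>D2 (elev k \<beta>) i j \<alpha>\<bar>)"
      by (simp only: D2_elev Kn diff_divide_distrib sum_divide_distrib abs_divide)
    finally show "D2 (elev k \<beta>) i i \<alpha> - (\<Sum>j\<in>UNIV - {i}. \<bar>D2 (elev k \<beta>) i j \<alpha>\<bar>) \<ge> 0" .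
  qed
  have E0: "elev k \<beta> (\<lambda>j. 0) = 1"
    by (simp add: elev_def sz_def R2a del: of_nat_Suc)
  have E1: "elev k \<beta> (\<lambda>j. Suc k * ev i j) = 1" for i
  proof -
    have "elev k \<beta> (\<lambda>j. Suc k * ev i j) = (real (Suc k) * \<beta> (unsh i (\<lambda>j. Suc k * ev i j)) + 0) / real (Suc k)"
      unfolding elev_def sum_ev sz_cev by simp
    also have "\<dots> = 1" by (simp only: unsh_c diff_Suc_1 R2b) simp
    finally show ?thesis .
  qed
  have E2: "elev k \<beta> (ev i) \<ge> 1 - 1 / real (Suc k)" for i
  proof -
    have "elev k \<beta> (ev i) = (1 + real k * \<beta> (ev i)) / (real k + 1)"
      unfolding elev_def sum_ev1 sz_ev by (simp add: unsh_1 R2a)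
    then show ?thesis using ineq_aux[OF kpos R3a[of i]] by (simp add: add.commute)
  qed
  have E3: "elev k \<beta> (\<lambda>j. k * ev i j) \<ge> 1 - 1 / real (Suc k)" for i
  proof -
    have "elev k \<beta> (\<lambda>j. k * ev i j) = (1 + real k * \<beta> (\<lambda>j. (k - 1) * ev i j)) / (real k + 1)"
      unfolding elev_def sum_ev sz_cev by (simp add: unsh_c R2b add.commute)
    then show ?thesis using ineq_aux[OF kpos R3b[of i]] by (simp add: add.commute)
  qed
  have E4: "elev k \<beta> (\<lambda>l. k * ev i l + ev j l) \<ge> 1 - 1 / real (Suc k)" if ij: "i \<noteq> j" for i j
  proof -
    have "elev k \<beta> (\<lambda>l. k * ev i l + ev j l) = (1 + real k * \<beta> (\<lambda>l. (k - 1) * ev i l + ev j l)) / (real k + 1)"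
      unfolding elev_def sum_ev2 sz_cev2 unsh_c2[OF ij] unsh_c2'[OF ij] R2b by (simp add: add.commute)
    then show ?thesis using ineq_aux[OF kpos R3c[OF ij]] by (simp add: add.commute)
  qed
  show ?thesis unfolding admissible_def
    using P1 P2 E0 E1 E2 E3 E4 by simp
qed

lemma Ak_mono: "k \<ge> 2 \<Longrightarrow> (Ak k :: (real^'n::finite \<Rightarrow> real) set) \<subseteq> Ak (Suc k)"
proof
  fix A :: "real^'n \<Rightarrow> real" assume k: "k \<ge> 2" and "A \<in> Ak k"
  then obtain \<beta> where adm: "admissible k \<beta>" and A: "\<forall>w\<in>unit_simplex. A w = (\<Sum>\<alpha>\<in>Gamma k. \<beta> \<alpha> * bern k \<alpha> w)"
    by (auto simp: Ak_def)
  have "\<forall>w\<in>unit_simplex. A w = (\<Sum>\<alpha>\<in>Gamma (Suc k). elev k \<beta> \<alpha> * bern (Suc k) \<alpha> w)"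
    using A BB_elev[of k \<beta>] by (simp add: BB_def)
  then show "A \<in> Ak (Suc k)" using admissible_elev[OF k adm] by (auto simp: Ak_def)
qed

lemma wlast_line: "wlast (x + t *\<^sub>R u) = wlast x - t * (\<Sum>i\<in>UNIV. u$i)"
  by (simp add: wlast_def sum.distrib sum_distrib_left)

lemma mono_unsh: "\<gamma> i \<noteq> 0 \<Longrightarrow> mono \<gamma> y = y$i * mono (unsh i \<gamma>) y"
  by (metis mono_shift shift_unsh)

lemma mono_unsh_remove: "mono (unsh i \<gamma>) y = (y$i) ^ (\<gamma> i - 1) * (\<Prod>j\<in>UNIV - {i}. (y$j) ^ (\<gamma> j))"
proof -
  have "mono (unsh i \<gamma>) y = (y$i) ^ (\<gamma> i - 1) * (\<Prod>j\<in>UNIV - {i}. (y$j) ^ (unsh i \<gamma> j))"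
    unfolding mono_def by (subst prod.remove[of UNIV i]) (auto simp: unsh_def ev_def)
  also have "(\<Prod>j\<in>UNIV - {i}. (y$j) ^ (unsh i \<gamma> j)) = (\<Prod>j\<in>UNIV - {i}. (y$j) ^ (\<gamma> j))"
    by (rule prod.cong) (auto simp: unsh_def ev_def)
  finally show ?thesis .
qed

lemma deriv_mono:
  fixes x u :: "real^'n::finite"
  shows "((\<lambda>t. mono \<gamma> (x + t *\<^sub>R u)) has_real_derivative
     (\<Sum>i\<in>UNIV. u$i * (real (\<gamma> i) * mono (unsh i \<gamma>) (x + t *\<^sub>R u)))) (at t)"
proof -
  have eq: "(\<lambda>t. mono \<gamma> (x + t *\<^sub>R u)) = (\<lambda>t. \<Prod>i\<in>UNIV. (\<lambda>i t. (x$i + t * u$i) ^ (\<gamma> i)) i t)"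
    by (simp add: mono_def)
  have d: "((\<lambda>t. (x$i + t * u$i) ^ (\<gamma> i)) has_real_derivative
      real (\<gamma> i) * (x$i + t * u$i) ^ (\<gamma> i - 1) * u$i) (at t)" for i
    by (auto intro!: derivative_eq_intros)
  show ?thesis unfolding eq
    apply (rule DERIV_cong[OF has_field_derivative_prod[OF d]])
    apply (rule sum.cong[OF refl])
    apply (simp add: mono_unsh_remove)
    done
qed

lemma deriv_wl:
  fixes x u :: "real^'n::finite"
  shows "((\<lambda>t. wlast (x + t *\<^sub>R u) ^ m) has_real_derivative
     real m * wlast (x + t *\<^sub>R u) ^ (m - 1) * (- (\<Sum>i\<in>UNIV. u$i))) (at t)"
  unfolding wlast_line by (auto intro!: derivative_eq_intros)

lemma deriv_bern:
  fixes x u :: "real^'n::finite"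
  shows "((\<lambda>t. bern K \<gamma> (x + t *\<^sub>R u)) has_real_derivative
     coef K \<gamma> * ((\<Sum>i\<in>UNIV. u$i * (real (\<gamma> i) * mono (unsh i \<gamma>) (x + t *\<^sub>R u))) * wlast (x + t *\<^sub>R u) ^ (K - sz \<gamma>)
      + mono \<gamma> (x + t *\<^sub>R u) * (real (K - sz \<gamma>) * wlast (x + t *\<^sub>R u) ^ (K - sz \<gamma> - 1) * (- (\<Sum>i\<in>UNIV. u$i))))) (at t)"
proof -
  have eq: "(\<lambda>t. bern K \<gamma> (x + t *\<^sub>R u)) = (\<lambda>t. coef K \<gamma> * (mono \<gamma> (x + t *\<^sub>R u) * wlast (x + t *\<^sub>R u) ^ (K - sz \<gamma>)))"
    by (simp add: bern_eq mult.assoc fun_eq_iff)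
  show ?thesis unfolding eq
    by (rule DERIV_cong[OF DERIV_cmult[OF DERIV_mult[OF deriv_mono deriv_wl]]]) (simp add: algebra_simps)
qed

lemma deriv_BB:
  fixes x u :: "real^'n::finite"
  shows "((\<lambda>t. BB (Suc k) \<beta> (x + t *\<^sub>R u)) has_real_derivative
     real (Suc k) * BB k (\<lambda>\<alpha>. \<Sum>i\<in>UNIV. u$i * D1 \<beta> i \<alpha>) (x + t *\<^sub>R u)) (at t)"
proof -
  define y where "y = x + t *\<^sub>R u"
  define S where "S = (\<Sum>i\<in>UNIV. u$i)"
  define wl where "wl = wlast y"
  have raw: "((\<lambda>t. BB (Suc k) \<beta> (x + t *\<^sub>R u)) has_real_derivative
     (\<Sum>\<gamma>\<in>Gamma (Suc k). \<beta> \<gamma> * (coef (Suc k) \<gamma> * ((\<Sum>i\<in>UNIV. u$i * (real (\<gamma> i) * mono (unsh i \<gamma>) y)) * wl ^ (Suc k - sz \<gamma>)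
      + mono \<gamma> y * (real (Suc k - sz \<gamma>) * wl ^ (Suc k - sz \<gamma> - 1) * (- S)))))) (at t)"
    unfolding BB_def y_def S_def wl_def
    by (intro DERIV_sum DERIV_cmult deriv_bern)
  have p1: "(\<Sum>\<gamma>\<in>Gamma (Suc k). real (\<gamma> i) * (\<beta> \<gamma> * coef (Suc k) \<gamma> * mono (unsh i \<gamma>) y * wl ^ (Suc k - sz \<gamma>)))
     = (\<Sum>\<alpha>\<in>Gamma k. \<beta> (shift i \<alpha>) * (real (Suc k) * bern k \<alpha> y))" for i
  proof -
    have "(\<Sum>\<gamma>\<in>Gamma (Suc k). real (\<gamma> i) * (\<beta> \<gamma> * coef (Suc k) \<gamma> * mono (unsh i \<gamma>) y * wl ^ (Suc k - sz \<gamma>)))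
      = (\<Sum>\<alpha>\<in>Gamma k. real (Suc (\<alpha> i)) * (\<beta> (shift i \<alpha>) * coef (Suc k) (shift i \<alpha>) * mono \<alpha> y * wl ^ (k - sz \<alpha>)))"
      by (simp only: reindex1 unsh_shift sz_shift diff_Suc_Suc)
    also have "\<dots> = (\<Sum>\<alpha>\<in>Gamma k. \<beta> (shift i \<alpha>) * (real (Suc k) * bern k \<alpha> y))"
    proof (rule sum.cong[OF refl])
      fix \<alpha> :: "'n \<Rightarrow> nat" assume "\<alpha> \<in> Gamma k"
      then have a: "sz \<alpha> \<le> k" by (simp add: Gamma_iff)
      have "real (Suc (\<alpha> i)) * (\<beta> (shift i \<alpha>) * coef (Suc k) (shift i \<alpha>) * mono \<alpha> y * wl ^ (k - sz \<alpha>))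
          = \<beta> (shift i \<alpha>) * (coef (Suc k) (shift i \<alpha>) * real (Suc (\<alpha> i))) * mono \<alpha> y * wl ^ (k - sz \<alpha>)"
        by (simp only: mult_ac)
      also have "\<dots> = \<beta> (shift i \<alpha>) * (real (Suc k) * bern k \<alpha> y)"
        by (simp only: coef_shift[OF a]) (simp add: bern_eq wl_def mult_ac)
      finally show "real (Suc (\<alpha> i)) * (\<beta> (shift i \<alpha>) * coef (Suc k) (shift i \<alpha>) * mono \<alpha> y * wl ^ (k - sz \<alpha>))
          = \<beta> (shift i \<alpha>) * (real (Suc k) * bern k \<alpha> y)" .
    qed
    finally show ?thesis .
  qed
  have p2: "(\<Sum>\<gamma>\<in>Gamma (Suc k). real (Suc k - sz \<gamma>) * (\<beta> \<gamma> * coef (Suc k) \<gamma> * mono \<gamma> y * wl ^ (Suc k - sz \<gamma> - 1)))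
     = (\<Sum>\<alpha>\<in>Gamma k. \<beta> \<alpha> * (real (Suc k) * bern k \<alpha> y))"
  proof -
    have "(\<Sum>\<gamma>\<in>Gamma (Suc k). real (Suc k - sz \<gamma>) * (\<beta> \<gamma> * coef (Suc k) \<gamma> * mono \<gamma> y * wl ^ (Suc k - sz \<gamma> - 1)))
      = (\<Sum>\<alpha>\<in>Gamma k. real (Suc k - sz \<alpha>) * (\<beta> \<alpha> * coef (Suc k) \<alpha> * mono \<alpha> y * wl ^ (Suc k - sz \<alpha> - 1)))"
      by (rule reindex2)
    also have "\<dots> = (\<Sum>\<alpha>\<in>Gamma k. \<beta> \<alpha> * (real (Suc k) * bern k \<alpha> y))"
    proof (rule sum.cong[OF refl])
      fix \<alpha> :: "'n \<Rightarrow> nat" assume "\<alpha> \<in> Gamma k"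
      then have a: "sz \<alpha> \<le> k" by (simp add: Gamma_iff)
      have e: "Suc k - sz \<alpha> - 1 = k - sz \<alpha>" using a by simp
      have "real (Suc k - sz \<alpha>) * (\<beta> \<alpha> * coef (Suc k) \<alpha> * mono \<alpha> y * wl ^ (Suc k - sz \<alpha> - 1))
          = \<beta> \<alpha> * (coef (Suc k) \<alpha> * real (Suc k - sz \<alpha>)) * mono \<alpha> y * wl ^ (k - sz \<alpha>)"
        by (simp only: mult_ac e)
      also have "\<dots> = \<beta> \<alpha> * (real (Suc k) * bern k \<alpha> y)"
        by (simp only: coef_same[OF a]) (simp add: bern_eq wl_def mult_ac)
      finally show "real (Suc k - sz \<alpha>) * (\<beta> \<alpha> * coef (Suc k) \<alpha> * mono \<alpha> y * wl ^ (Suc k - sz \<alpha> - 1))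
          = \<beta> \<alpha> * (real (Suc k) * bern k \<alpha> y)" .
    qed
    finally show ?thesis .
  qed
  have "(\<Sum>\<gamma>\<in>Gamma (Suc k). \<beta> \<gamma> * (coef (Suc k) \<gamma> * ((\<Sum>i\<in>UNIV. u$i * (real (\<gamma> i) * mono (unsh i \<gamma>) y)) * wl ^ (Suc k - sz \<gamma>)
      + mono \<gamma> y * (real (Suc k - sz \<gamma>) * wl ^ (Suc k - sz \<gamma> - 1) * (- S)))))
    = (\<Sum>i\<in>UNIV. u$i * (\<Sum>\<gamma>\<in>Gamma (Suc k). real (\<gamma> i) * (\<beta> \<gamma> * coef (Suc k) \<gamma> * mono (unsh i \<gamma>) y * wl ^ (Suc k - sz \<gamma>))))
      - S * (\<Sum>\<gamma>\<in>Gamma (Suc k). real (Suc k - sz \<gamma>) * (\<beta> \<gamma> * coef (Suc k) \<gamma> * mono \<gamma> y * wl ^ (Suc k - sz \<gamma> - 1)))"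
    by (simp add: algebra_simps sum_distrib_left sum_distrib_right sum.distrib sum_subtractf sum.swap[of _ "Gamma (Suc k)"])
  also have "\<dots> = (\<Sum>i\<in>UNIV. u$i * (\<Sum>\<alpha>\<in>Gamma k. \<beta> (shift i \<alpha>) * (real (Suc k) * bern k \<alpha> y)))
      - S * (\<Sum>\<alpha>\<in>Gamma k. \<beta> \<alpha> * (real (Suc k) * bern k \<alpha> y))"
    by (simp only: p1 p2)
  also have "\<dots> = real (Suc k) * BB k (\<lambda>\<alpha>. \<Sum>i\<in>UNIV. u$i * D1 \<beta> i \<alpha>) y"
    by (simp add: BB_def S_def D1_shift algebra_simps sum_distrib_left sum_distrib_right sum_subtractf sum.swap[of _ "Gamma k"] del: of_nat_Suc)
  finally show ?thesis using raw y_def by simp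
qed

lemma quad_nonneg:
  fixes M :: "'n::finite \<Rightarrow> 'n \<Rightarrow> real"
  assumes sym: "\<And>i j. M i j = M j i"
    and dd: "\<And>i. M i i - (\<Sum>j\<in>UNIV - {i}. \<bar>M i j\<bar>) \<ge> 0"
  shows "(\<Sum>i\<in>UNIV. \<Sum>j\<in>UNIV. u i * u j * M i j) \<ge> 0"
proof -
  define F where "F i j = (if i = j then 0 else \<bar>M i j\<bar>)" for i j
  have Fsym: "F i j = F j i" for i j by (simp add: F_def sym)
  have tm: "u i * u j * M i j \<ge> (if i = j then (u i)^2 * M i i else 0) - F i j * ((u i)^2 + (u j)^2) / 2" for i j
  proof (cases "i = j")
    case True then show ?thesis by (simp add: F_def power2_eq_square)
  next
    case False
    have "\<bar>u i * u j\<bar> \<le> ((u i)^2 + (u j)^2) / 2"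
      using sum_squares_bound[of "\<bar>u i\<bar>" "\<bar>u j\<bar>"]
      by (simp add: abs_mult power2_eq_square)
    then have "\<bar>u i * u j\<bar> * \<bar>M i j\<bar> \<le> ((u i)^2 + (u j)^2) / 2 * \<bar>M i j\<bar>"
      by (rule mult_right_mono) simp
    moreover have "- (\<bar>u i * u j\<bar> * \<bar>M i j\<bar>) \<le> u i * u j * M i j"
      by (metis abs_ge_minus_self abs_mult minus_le_iff)
    moreover have "F i j * ((u i)^2 + (u j)^2) / 2 = ((u i)^2 + (u j)^2) / 2 * \<bar>M i j\<bar>"
      using False by (simp add: F_def)
    ultimately show ?thesis using False by (simp only: if_False)
  qed
  have "(\<Sum>i\<in>UNIV. \<Sum>j\<in>UNIV. u i * u j * M i j)
     \<ge> (\<Sum>i\<in>UNIV. \<Sum>j\<in>UNIV. (if i = j then (u i)^2 * M i i else 0) - F i j * ((u i)^2 + (u j)^2) / 2)"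
    by (intro sum_mono tm)
  also have "(\<Sum>i\<in>UNIV. \<Sum>j\<in>UNIV. (if i = j then (u i)^2 * M i i else 0) - F i j * ((u i)^2 + (u j)^2) / 2)
     = (\<Sum>i\<in>UNIV. (u i)^2 * M i i) - ((\<Sum>i\<in>UNIV. \<Sum>j\<in>UNIV. F i j * (u i)^2) + (\<Sum>i\<in>UNIV. \<Sum>j\<in>UNIV. F i j * (u j)^2)) / 2"
    by (simp add: sum_subtractf sum.distrib distrib_left add_divide_distrib sum_divide_distrib)
  also have "(\<Sum>i\<in>UNIV. \<Sum>j\<in>UNIV. F i j * (u j)^2) = (\<Sum>i\<in>UNIV. \<Sum>j\<in>UNIV. F i j * (u i)^2)"
    by (subst sum.swap) (simp add: Fsym)
  also have "(\<Sum>i\<in>UNIV. (u i)^2 * M i i) - ((\<Sum>i\<in>UNIV. \<Sum>j\<in>UNIV. F i j * (u i)^2) + (\<Sum>i\<in>UNIV. \<Sum>j\<in>UNIV. F i j * (u i)^2)) / 2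
     = (\<Sum>i\<in>UNIV. (u i)^2 * (M i i - (\<Sum>j\<in>UNIV. F i j)))"
    by (simp add: sum_subtractf sum_distrib_left sum_distrib_right algebra_simps)
  also have "\<dots> \<ge> 0"
  proof (rule sum_nonneg)
    fix i
    have "(\<Sum>j\<in>UNIV. F i j) = F i i + (\<Sum>j\<in>UNIV - {i}. F i j)"
      by (rule sum.remove) auto
    also have "\<dots> = (\<Sum>j\<in>UNIV - {i}. \<bar>M i j\<bar>)"
      by (simp add: F_def)
    finally show "0 \<le> (u i)^2 * (M i i - (\<Sum>j\<in>UNIV. F i j))" using dd[of i] by simp
  qed
  finally show ?thesis by simp
qed

lemma tangent_1d:
  fixes g g' g'' :: "real \<Rightarrow> real"
  assumes d1: "\<And>t. (g has_real_derivative g' t) (at t)"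
    and d2: "\<And>t. (g' has_real_derivative g'' t) (at t)"
    and pos: "\<And>t. 0 \<le> t \<Longrightarrow> t \<le> 1 \<Longrightarrow> g'' t \<ge> 0"
    and s: "0 \<le> s" "s \<le> 1" and r: "0 \<le> r" "r \<le> 1"
  shows "g r \<ge> g s + g' s * (r - s)"
proof -
  have mono: "g' a \<le> g' b" if "0 \<le> a" "a \<le> b" "b \<le> 1" for a b
    by (rule deriv_nonneg_imp_mono[OF d2]) (use that pos in auto)
  define h where "h t = g t - g' s * t" for t
  have dh: "(h has_real_derivative (g' t - g' s)) (at t)" for t
    unfolding h_def by (auto intro!: derivative_eq_intros d1)
  show ?thesis
  proof (cases "s \<le> r")
    case True
    have "h s \<le> h r"
      by (rule deriv_nonneg_imp_mono[OF dh]) (use True s r mono in auto)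
    then show ?thesis by (simp add: h_def algebra_simps)
  next
    case False
    have dh': "((\<lambda>t. - h t) has_real_derivative - (g' t - g' s)) (at t)" for t
      by (rule DERIV_minus[OF dh])
    have "- h r \<le> - h s"
      by (rule deriv_nonneg_imp_mono[OF dh']) (use False s r mono in auto)
    then show ?thesis by (simp add: h_def algebra_simps)
  qed
qed

lemma convex_1d:
  fixes g g' g'' :: "real \<Rightarrow> real"
  assumes d1: "\<And>t. (g has_real_derivative g' t) (at t)"
    and d2: "\<And>t. (g' has_real_derivative g'' t) (at t)"
    and pos: "\<And>t. 0 \<le> t \<Longrightarrow> t \<le> 1 \<Longrightarrow> g'' t \<ge> 0"
    and t: "0 \<le> t" "t \<le> 1"
  shows "g t \<le> (1 - t) * g 0 + t * g 1"
proof -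
  have a: "g 0 \<ge> g t + g' t * (0 - t)" by (rule tangent_1d[OF d1 d2 pos]) (use t in auto)
  have b: "g 1 \<ge> g t + g' t * (1 - t)" by (rule tangent_1d[OF d1 d2 pos]) (use t in auto)
  have "(1 - t) * g 0 \<ge> (1 - t) * (g t + g' t * (0 - t))" using a t by (intro mult_left_mono) auto
  moreover have "t * g 1 \<ge> t * (g t + g' t * (1 - t))" using b t by (intro mult_left_mono) auto
  ultimately have "(1 - t) * g 0 + t * g 1 \<ge> (1 - t) * (g t + g' t * (0 - t)) + t * (g t + g' t * (1 - t))"
    by linarith
  also have "(1 - t) * (g t + g' t * (0 - t)) + t * (g t + g' t * (1 - t)) = g t"
    by (simp add: algebra_simps)
  finally show ?thesis .
qed

lemma simplex_iff: "w \<in> unit_simplex \<longleftrightarrow> (\<forall>i. 0 \<le> w$i) \<and> wlast w \<ge> 0"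
  by (simp add: unit_simplex_def wlast_def)

lemma bern_nonneg: "w \<in> unit_simplex \<Longrightarrow> bern k \<alpha> w \<ge> 0"
  unfolding bern_eq coef_def mono_def simplex_iff
  by (intro mult_nonneg_nonneg divide_nonneg_nonneg prod_nonneg zero_le_power) auto

lemma BB_nonneg: "w \<in> unit_simplex \<Longrightarrow> (\<And>\<alpha>. \<alpha> \<in> Gamma k \<Longrightarrow> f \<alpha> \<ge> 0) \<Longrightarrow> BB k f w \<ge> 0"
  unfolding BB_def by (intro sum_nonneg mult_nonneg_nonneg bern_nonneg) auto

lemma BB_mono: "w \<in> unit_simplex \<Longrightarrow> (\<And>\<alpha>. \<alpha> \<in> Gamma k \<Longrightarrow> f \<alpha> \<le> g \<alpha>) \<Longrightarrow> BB k f w \<le> BB k g w"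
  unfolding BB_def by (intro sum_mono mult_right_mono bern_nonneg) auto

lemma simplex_line: "x \<in> unit_simplex \<Longrightarrow> y \<in> unit_simplex \<Longrightarrow> 0 \<le> t \<Longrightarrow> t \<le> 1 \<Longrightarrow>
   x + t *\<^sub>R (y - x) \<in> unit_simplex"
proof -
  assume x: "x \<in> unit_simplex" and y: "y \<in> unit_simplex" and t: "0 \<le> t" "t \<le> 1"
  have e: "x + t *\<^sub>R (y - x) = (1 - t) *\<^sub>R x + t *\<^sub>R y" by (simp add: algebra_simps)
  have "0 \<le> (1 - t) * x$i + t * y$i" for i using x y t by (auto simp: unit_simplex_def)
  moreover have "(\<Sum>i\<in>UNIV. (1 - t) * x$i + t * y$i) \<le> 1"
  proof -
    have "(\<Sum>i\<in>UNIV. (1 - t) * x$i + t * y$i) = (1 - t) * (\<Sum>i\<in>UNIV. x$i) + t * (\<Sum>i\<in>UNIV. y$i)"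
      by (simp add: sum.distrib sum_distrib_left)
    also have "\<dots> \<le> (1 - t) * 1 + t * 1"
      using x y t by (intro add_mono mult_left_mono) (auto simp: unit_simplex_def)
    finally show ?thesis by simp
  qed
  ultimately show ?thesis unfolding e by (simp add: unit_simplex_def)
qed

lemma D2_sym: "D2 \<beta> i j \<alpha> = D2 \<beta> j i \<alpha>"
  by (simp add: D2_def D1_def add_ac)

lemma second_deriv:
  fixes x u :: "real^'n::finite"
  shows "((\<lambda>t. real (Suc (Suc n)) * BB (Suc n) (\<lambda>\<alpha>. \<Sum>i\<in>UNIV. u$i * D1 \<beta> i \<alpha>) (x + t *\<^sub>R u)) has_real_derivative
     real (Suc (Suc n)) * (real (Suc n) * BB n (\<lambda>\<alpha>. \<Sum>j\<in>UNIV. \<Sum>i\<in>UNIV. u$j * u$i * D2 \<beta> j i \<alpha>) (x + t *\<^sub>R u))) (at t)"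
proof -
  have e: "(\<lambda>\<alpha>. \<Sum>j\<in>UNIV. u$j * D1 (\<lambda>\<alpha>. \<Sum>i\<in>UNIV. u$i * D1 \<beta> i \<alpha>) j \<alpha>)
     = (\<lambda>\<alpha>. \<Sum>j\<in>UNIV. \<Sum>i\<in>UNIV. u$j * u$i * D2 \<beta> j i \<alpha>)"
  proof (rule ext, rule sum.cong[OF refl])
    fix \<alpha> j
    have "D1 (\<lambda>\<alpha>. \<Sum>i\<in>UNIV. u$i * D1 \<beta> i \<alpha>) j \<alpha> = (\<Sum>i\<in>UNIV. u$i * (D1 \<beta> i (\<lambda>l. \<alpha> l + ev j l) - D1 \<beta> i \<alpha>))"
      by (simp add: D1_def[of "\<lambda>\<alpha>. \<Sum>i\<in>UNIV. u$i * D1 \<beta> i \<alpha>"] right_diff_distrib sum_subtractf)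
    also have "\<dots> = (\<Sum>i\<in>UNIV. u$i * D2 \<beta> j i \<alpha>)" by (simp add: D2_def)
    finally show "u$j * D1 (\<lambda>\<alpha>. \<Sum>i\<in>UNIV. u$i * D1 \<beta> i \<alpha>) j \<alpha> = (\<Sum>i\<in>UNIV. u$j * u$i * D2 \<beta> j i \<alpha>)"
      by (simp add: sum_distrib_left mult.assoc)
  qed
  show ?thesis
    by (rule DERIV_cmult, subst e[symmetric], rule deriv_BB)
qed

lemma BB_convex:
  fixes x y :: "real^'n::finite"
  assumes adm: "admissible (Suc (Suc n)) \<beta>" and x: "x \<in> unit_simplex" and y: "y \<in> unit_simplex"
    and t: "0 \<le> t" "t \<le> 1"
  shows "BB (Suc (Suc n)) \<beta> (x + t *\<^sub>R (y - x)) \<le> (1 - t) * BB (Suc (Suc n)) \<beta> x + t * BB (Suc (Suc n)) \<beta> y"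
proof -
  define u where "u = y - x"
  have R1: "\<And>a i. a \<in> Gamma n \<Longrightarrow> D2 \<beta> i i a - (\<Sum>j\<in>UNIV - {i}. \<bar>D2 \<beta> i j a\<bar>) \<ge> 0"
    using adm by (simp add: admissible_def)
  have "BB (Suc (Suc n)) \<beta> (x + t *\<^sub>R u) \<le> (1 - t) * BB (Suc (Suc n)) \<beta> (x + 0 *\<^sub>R u) + t * BB (Suc (Suc n)) \<beta> (x + 1 *\<^sub>R u)"
  proof (rule convex_1d[OF deriv_BB second_deriv _ t])
    fix s :: real assume s: "0 \<le> s" "s \<le> 1"
    have inS: "x + s *\<^sub>R u \<in> unit_simplex" unfolding u_def by (rule simplex_line[OF x y s])
    have "BB n (\<lambda>\<alpha>. \<Sum>j\<in>UNIV. \<Sum>i\<in>UNIV. u$j * u$i * D2 \<beta> j i \<alpha>) (x + s *\<^sub>R u) \<ge> 0"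
    proof (rule BB_nonneg[OF inS])
      fix \<alpha> :: "'n \<Rightarrow> nat" assume a: "\<alpha> \<in> Gamma n"
      show "0 \<le> (\<Sum>j\<in>UNIV. \<Sum>i\<in>UNIV. u$j * u$i * D2 \<beta> j i \<alpha>)"
        by (rule quad_nonneg[of "\<lambda>i j. D2 \<beta> i j \<alpha>" "\<lambda>i. u$i"]) (use D2_sym R1[OF a] in auto)
    qed
    then show "0 \<le> real (Suc (Suc n)) * (real (Suc n) * BB n (\<lambda>\<alpha>. \<Sum>j\<in>UNIV. \<Sum>i\<in>UNIV. u$j * u$i * D2 \<beta> j i \<alpha>) (x + s *\<^sub>R u))"
      by simp
  qed
  then show ?thesis by (simp add: u_def)
qed

lemma BB_single:
  assumes "\<alpha>0 \<in> Gamma n" "bern n \<alpha>0 z = 1" "\<And>\<alpha>. \<alpha> \<in> Gamma n \<Longrightarrow> \<alpha> \<noteq> \<alpha>0 \<Longrightarrow> bern n \<alpha> z = 0"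
  shows "BB n f z = f \<alpha>0"
proof -
  have "BB n f z = f \<alpha>0 * bern n \<alpha>0 z + (\<Sum>\<alpha>\<in>Gamma n - {\<alpha>0}. f \<alpha> * bern n \<alpha> z)"
    unfolding BB_def by (rule sum.remove[OF finite_Gamma assms(1)])
  also have "(\<Sum>\<alpha>\<in>Gamma n - {\<alpha>0}. f \<alpha> * bern n \<alpha> z) = 0"
    by (rule sum.neutral) (use assms(3) in auto)
  finally show ?thesis using assms(2) by simp
qed

lemma BB_at0: "BB n f (0::real^'n::finite) = f (\<lambda>_. 0)"
proof (rule BB_single)
  show "(\<lambda>_. 0) \<in> (Gamma n :: ('n \<Rightarrow> nat) set)" by (simp add: Gamma_def)
  show "bern n (\<lambda>_. 0) (0::real^'n) = 1" by (simp add: bern_def wlast_def)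
  fix \<alpha> :: "'n \<Rightarrow> nat" assume "\<alpha> \<noteq> (\<lambda>_. 0)"
  then obtain i where i: "\<alpha> i \<noteq> 0" by auto
  have "(\<Prod>j\<in>UNIV. ((0::real^'n)$j) ^ (\<alpha> j)) = 0"
    using i by (auto simp: prod_zero_iff)
  then show "bern n \<alpha> (0::real^'n) = 0" by (simp add: bern_def)
qed

definition vx :: "'n::finite \<Rightarrow> real^'n" where
  "vx i = (\<chi> j. if j = i then 1 else 0)"

lemma vx_nth: "vx i $ j = (if j = i then 1 else 0)"
  by (simp add: vx_def)

lemma wlast_vx: "wlast (vx i) = 0"
  by (simp add: wlast_def vx_nth)

lemma vx_simplex: "vx i \<in> unit_simplex"
  by (simp add: simplex_iff wlast_vx vx_nth)

lemma BB_atvx: "BB n f (vx (i::'n::finite)) = f (\<lambda>j. n * ev i j)"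
proof (rule BB_single)
  show "(\<lambda>j. n * ev i j) \<in> Gamma n" by (simp add: Gamma_iff sz_cev)
  have p1: "(\<Prod>j\<in>UNIV. fact (n * ev i j) :: real) = fact n"
  proof -
    have "(\<Prod>j\<in>UNIV. fact (n * ev i j) :: real) = (\<Prod>j\<in>UNIV. if j = i then fact n else 1)"
      by (rule prod.cong) (auto simp: ev_def)
    then show ?thesis by simp
  qed
  have p2: "(\<Prod>j\<in>UNIV. (vx i $ j) ^ (n * ev i j)) = 1"
    by (rule prod.neutral) (auto simp: ev_def vx_nth)
  show "bern n (\<lambda>j. n * ev i j) (vx i) = 1"
    unfolding bern_def using p1 p2 sz_cev[of n i] by (simp add: sz_def)
  fix \<alpha> :: "'n \<Rightarrow> nat" assume a: "\<alpha> \<in> Gamma n" "\<alpha> \<noteq> (\<lambda>j. n * ev i j)"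
  show "bern n \<alpha> (vx i) = 0"
  proof (cases "\<exists>j. j \<noteq> i \<and> \<alpha> j \<noteq> 0")
    case True
    then obtain j where j: "j \<noteq> i" "\<alpha> j \<noteq> 0" by auto
    have "(\<Prod>j\<in>UNIV. (vx i $ j) ^ (\<alpha> j)) = 0"
      using j by (auto simp: prod_zero_iff vx_nth)
    then show ?thesis by (simp add: bern_def)
  next
    case False
    then have e: "\<alpha> = (\<lambda>j. \<alpha> i * ev i j)" by (auto simp: fun_eq_iff ev_def)
    then have "sz \<alpha> = \<alpha> i" by (metis sz_cev)
    moreover have "\<alpha> i \<noteq> n" using a(2) e by auto
    ultimately have "sz \<alpha> < n" using a(1) by (simp add: Gamma_iff)
    then show ?thesis by (simp add: bern_eq wlast_vx)
  qed
qed

lemma tangent_BB: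
  fixes x y :: "real^'n::finite"
  assumes adm: "admissible (Suc (Suc n)) \<beta>" and x: "x \<in> unit_simplex" and y: "y \<in> unit_simplex"
  shows "BB (Suc (Suc n)) \<beta> y \<ge> BB (Suc (Suc n)) \<beta> x + real (Suc (Suc n)) * BB (Suc n) (\<lambda>\<alpha>. \<Sum>i\<in>UNIV. (y - x)$i * D1 \<beta> i \<alpha>) x"
proof -
  define u where "u = y - x"
  have R1: "\<And>a i. a \<in> Gamma n \<Longrightarrow> D2 \<beta> i i a - (\<Sum>j\<in>UNIV - {i}. \<bar>D2 \<beta> i j a\<bar>) \<ge> 0"
    using adm by (simp add: admissible_def)
  have "BB (Suc (Suc n)) \<beta> (x + 1 *\<^sub>R u) \<ge> BB (Suc (Suc n)) \<beta> (x + 0 *\<^sub>R u) + real (Suc (Suc n)) * BB (Suc n) (\<lambda>\<alpha>. \<Sum>i\<in>UNIV. u$i * D1 \<beta> i \<alpha>) (x + 0 *\<^sub>R u) * (1 - 0)"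
  proof (rule tangent_1d[OF deriv_BB second_deriv])
    fix s :: real assume s: "0 \<le> s" "s \<le> 1"
    have inS: "x + s *\<^sub>R u \<in> unit_simplex" unfolding u_def by (rule simplex_line[OF x y s])
    have "BB n (\<lambda>\<alpha>. \<Sum>j\<in>UNIV. \<Sum>i\<in>UNIV. u$j * u$i * D2 \<beta> j i \<alpha>) (x + s *\<^sub>R u) \<ge> 0"
    proof (rule BB_nonneg[OF inS])
      fix \<alpha> :: "'n \<Rightarrow> nat" assume a: "\<alpha> \<in> Gamma n"
      show "0 \<le> (\<Sum>j\<in>UNIV. \<Sum>i\<in>UNIV. u$j * u$i * D2 \<beta> j i \<alpha>)"
        by (rule quad_nonneg[of "\<lambda>i j. D2 \<beta> i j \<alpha>" "\<lambda>i. u$i"]) (use D2_sym R1[OF a] in auto)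
    qed
    then show "0 \<le> real (Suc (Suc n)) * (real (Suc n) * BB n (\<lambda>\<alpha>. \<Sum>j\<in>UNIV. \<Sum>i\<in>UNIV. u$j * u$i * D2 \<beta> j i \<alpha>) (x + s *\<^sub>R u))"
      by simp
  qed auto
  then show ?thesis by (simp add: u_def)
qed

lemma zero_simplex: "0 \<in> unit_simplex"
  by (simp add: unit_simplex_def)

lemma lower_wlast:
  fixes w :: "real^'n::finite"
  assumes adm: "admissible (Suc (Suc n)) \<beta>" and w: "w \<in> unit_simplex"
  shows "BB (Suc (Suc n)) \<beta> w \<ge> wlast w"
proof -
  let ?K = "real (Suc (Suc n))"
  have R2a: "\<beta> (\<lambda>j. 0) = 1" and R3a: "\<And>i. \<beta> (ev i) \<ge> 1 - 1 / ?K"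
    using adm by (simp_all add: admissible_def)
  have t: "BB (Suc (Suc n)) \<beta> w \<ge> BB (Suc (Suc n)) \<beta> 0 + ?K * BB (Suc n) (\<lambda>\<alpha>. \<Sum>i\<in>UNIV. (w - 0)$i * D1 \<beta> i \<alpha>) 0"
    by (rule tangent_BB[OF adm zero_simplex w])
  have e: "(\<lambda>j. (0::nat) + ev i j) = ev i" for i by (simp add: fun_eq_iff)
  have "?K * BB (Suc n) (\<lambda>\<alpha>. \<Sum>i\<in>UNIV. (w - 0)$i * D1 \<beta> i \<alpha>) 0 = (\<Sum>i\<in>UNIV. w$i * (?K * (\<beta> (ev i) - 1)))"
    by (simp add: BB_at0 D1_def e R2a sum_distrib_left mult_ac)
  also have "\<dots> \<ge> (\<Sum>i\<in>UNIV. w$i * (-1))"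
  proof (rule sum_mono, rule mult_left_mono)
    fix i
    have "?K * (\<beta> (ev i) - 1) \<ge> ?K * (- 1 / ?K)"
      using R3a[of i] by (intro mult_left_mono) auto
    then show "-1 \<le> ?K * (\<beta> (ev i) - 1)" by simp
    show "0 \<le> w$i" using w by (simp add: unit_simplex_def)
  qed
  finally show ?thesis using t by (simp add: BB_at0 R2a wlast_def sum_negf)
qed

lemma lower_vx:
  fixes w :: "real^'n::finite"
  assumes adm: "admissible (Suc (Suc n)) \<beta>" and w: "w \<in> unit_simplex"
  shows "BB (Suc (Suc n)) \<beta> w \<ge> w$i"
proof -
  let ?K = "real (Suc (Suc n))"
  define a0 where "a0 = (\<lambda>j. Suc n * ev i j)"
  define c where "c j = \<beta> (\<lambda>l. a0 l + ev j l)" for j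
  define b0 where "b0 = \<beta> a0"
  have R2b: "\<And>i. \<beta> (\<lambda>j. Suc (Suc n) * ev i j) = 1"
    and R3b: "\<And>i. \<beta> (\<lambda>j. (Suc (Suc n) - 1) * ev i j) \<ge> 1 - 1 / ?K"
    and R3c: "\<And>i j. i \<noteq> j \<Longrightarrow> \<beta> (\<lambda>l. (Suc (Suc n) - 1) * ev i l + ev j l) \<ge> 1 - 1 / ?K"
    using adm unfolding admissible_def by blast+
  have ci: "c i = 1"
  proof -
    have h: "(\<lambda>l. a0 l + ev i l) = (\<lambda>j. Suc (Suc n) * ev i j)" by (simp add: a0_def fun_eq_iff ev_def)
    show ?thesis unfolding c_def h by (rule R2b)
  qed
  have cj: "c j \<ge> 1 - 1 / ?K" for j
  proof (cases "j = i")
    case True then show ?thesis using ci by simp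
  next
    case False then show ?thesis using R3c[of i j] by (simp add: c_def a0_def)
  qed
  have b0: "b0 \<ge> 1 - 1 / ?K" using R3b[of i] by (simp add: b0_def a0_def)
  have wpos: "\<And>j. 0 \<le> w$j" and wl: "wlast w \<ge> 0" using w by (auto simp: simplex_iff)
  have t: "BB (Suc (Suc n)) \<beta> w \<ge> BB (Suc (Suc n)) \<beta> (vx i) + ?K * BB (Suc n) (\<lambda>\<alpha>. \<Sum>j\<in>UNIV. (w - vx i)$j * D1 \<beta> j \<alpha>) (vx i)"
    by (rule tangent_BB[OF adm vx_simplex w])
  have v1: "BB (Suc (Suc n)) \<beta> (vx i) = 1" unfolding BB_atvx by (rule R2b)
  have "BB (Suc n) (\<lambda>\<alpha>. \<Sum>j\<in>UNIV. (w - vx i)$j * D1 \<beta> j \<alpha>) (vx i)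
      = (\<Sum>j\<in>UNIV. (w$j - (if j = i then 1 else 0)) * (c j - b0))"
    by (simp add: BB_atvx D1_def c_def b0_def a0_def vx_nth)
  also have "\<dots> = (\<Sum>j\<in>UNIV. w$j * c j) - b0 * (\<Sum>j\<in>UNIV. w$j) - (c i - b0)"
  proof -
    have "(\<Sum>j\<in>UNIV. (w$j - (if j = i then 1 else 0)) * (c j - b0))
       = (\<Sum>j\<in>UNIV. w$j * c j - b0 * w$j - (if j = i then c i - b0 else 0))"
      by (rule sum.cong) (auto simp: algebra_simps)
    also have "\<dots> = (\<Sum>j\<in>UNIV. w$j * c j) - b0 * (\<Sum>j\<in>UNIV. w$j) - (c i - b0)"
      by (simp add: sum_subtractf sum_distrib_left)
    finally show ?thesis .
  qed
  also have "\<dots> = (\<Sum>j\<in>UNIV. w$j * c j) - 1 + b0 * wlast w"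
    using ci by (simp add: wlast_def algebra_simps)
  finally have eq: "BB (Suc n) (\<lambda>\<alpha>. \<Sum>j\<in>UNIV. (w - vx i)$j * D1 \<beta> j \<alpha>) (vx i) = (\<Sum>j\<in>UNIV. w$j * c j) - 1 + b0 * wlast w" .
  define p where "p = 1 - 1 / ?K"
  have s1: "(\<Sum>j\<in>UNIV. w$j * c j) \<ge> (\<Sum>j\<in>UNIV. w$j * p + (if j = i then w$i / ?K else 0))"
  proof (rule sum_mono)
    fix j
    show "w$j * p + (if j = i then w$i / ?K else 0) \<le> w$j * c j"
    proof (cases "j = i")
      case True then show ?thesis using ci by (simp add: p_def algebra_simps)
    next
      case False then show ?thesis using cj[of j] wpos[of j] by (simp add: p_def mult_left_mono)
    qed
  qed
  have s2: "(\<Sum>j\<in>UNIV. w$j * p + (if j = i then w$i / ?K else 0)) = p * (\<Sum>j\<in>UNIV. w$j) + w$i / ?K"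
    by (simp add: sum.distrib sum_distrib_left mult_ac sum.delta)
  have s3: "b0 * wlast w \<ge> p * wlast w" using b0 wl by (simp add: p_def mult_right_mono)
  have "(\<Sum>j\<in>UNIV. w$j * c j) - 1 + b0 * wlast w \<ge> p * ((\<Sum>j\<in>UNIV. w$j) + wlast w) + w$i / ?K - 1"
    using s1 s2 s3 by (simp only: distrib_left)
  then have "(\<Sum>j\<in>UNIV. w$j * c j) - 1 + b0 * wlast w \<ge> (w$i - 1) / ?K"
    by (simp add: sum_w_wlast diff_divide_distrib p_def)
  then have "?K * ((\<Sum>j\<in>UNIV. w$j * c j) - 1 + b0 * wlast w) \<ge> ?K * ((w$i - 1) / ?K)"
    by (intro mult_left_mono) auto
  then have "?K * ((\<Sum>j\<in>UNIV. w$j * c j) - 1 + b0 * wlast w) \<ge> w$i - 1" by simp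
  then show ?thesis using t v1 eq by simp
qed

lemma BB_one: "BB k (\<lambda>_. 1) (w::real^'n::finite) = 1"
proof (induction k)
  case 0
  have "BB 0 (\<lambda>_. 1) w = (\<lambda>_. 1) (\<lambda>_::'n. 0::nat)"
  proof (rule BB_single)
    show "(\<lambda>_. 0) \<in> (Gamma 0 :: ('n \<Rightarrow> nat) set)" by (simp add: Gamma_def)
    show "bern 0 (\<lambda>_. 0) w = 1" by (simp add: bern_def)
    fix \<alpha> :: "'n \<Rightarrow> nat" assume "\<alpha> \<in> Gamma 0" "\<alpha> \<noteq> (\<lambda>_. 0)"
    then show "bern 0 \<alpha> w = 0" by (auto simp: Gamma_def fun_eq_iff)
  qed
  then show ?case by simp
next
  case (Suc k)
  have "elev k (\<lambda>_::'n\<Rightarrow>nat. 1) = (\<lambda>_. 1)"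
    by (simp add: fun_eq_iff elev_EE EE_const del: of_nat_Suc)
  then have "BB (Suc k) (\<lambda>_. 1) w = BB (Suc k) (elev k (\<lambda>_. 1)) w" by simp
  also have "\<dots> = BB k (\<lambda>_. 1) w" by (rule BB_elev[symmetric])
  finally show ?case using Suc.IH by simp
qed

lemma comb_eq: "u + v = 1 \<Longrightarrow> u *\<^sub>R x + v *\<^sub>R (y::'a::real_vector) = x + v *\<^sub>R (y - x)"
proof -
  assume "u + v = 1"
  then have "u = 1 - v" by simp
  then show ?thesis by (simp add: scaleR_diff_left scaleR_diff_right)
qed

lemma Ak_sub_pickA: "k \<ge> 2 \<Longrightarrow> (Ak k :: (real^'n::finite \<Rightarrow> real) set) \<subseteq> pickA"
proof
  fix A :: "real^'n \<Rightarrow> real" assume k: "k \<ge> 2" and "A \<in> Ak k"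
  then obtain \<beta> where adm: "admissible k \<beta>" and A: "\<And>w. w \<in> unit_simplex \<Longrightarrow> A w = BB k \<beta> w"
    by (auto simp: Ak_def BB_def)
  obtain n where kn: "k = Suc (Suc n)" using k by (metis add_2_eq_Suc le_Suc_ex)
  have adm': "admissible (Suc (Suc n)) \<beta>" using adm kn by simp
  have b01: "\<And>a. a \<in> Gamma k \<Longrightarrow> \<beta> a \<le> 1" using adm by (simp add: admissible_def)
  have cvx: "convex (unit_simplex :: (real^'n) set)"
    unfolding convex_def
  proof (intro ballI allI impI)
    fix x y :: "real^'n" and u v :: real
    assume x: "x \<in> unit_simplex" and y: "y \<in> unit_simplex" and u0: "0 \<le> u" and v0: "0 \<le> v" and uv1: "u + v = 1"
    have uv: "0 \<le> u \<and> 0 \<le> v \<and> u + v = 1" using u0 v0 uv1 by simp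
    have "u *\<^sub>R x + v *\<^sub>R y = x + v *\<^sub>R (y - x)" using uv1 by (rule comb_eq)
    then show "u *\<^sub>R x + v *\<^sub>R y \<in> unit_simplex" using simplex_line[OF x y] uv by auto
  qed
  have "convex_on unit_simplex A"
    unfolding convex_on_def
  proof (intro conjI cvx ballI allI impI)
    fix x y :: "real^'n" and u v :: real
    assume x: "x \<in> unit_simplex" and y: "y \<in> unit_simplex" and u: "0 \<le> u" and v: "0 \<le> v" and uv: "u + v = 1"
    have e: "u *\<^sub>R x + v *\<^sub>R y = x + v *\<^sub>R (y - x)" using uv by (rule comb_eq)
    have "A (x + v *\<^sub>R (y - x)) = BB k \<beta> (x + v *\<^sub>R (y - x))"
      using simplex_line[OF x y] u v uv by (intro A) auto
    also have "\<dots> \<le> (1 - v) * BB k \<beta> x + v * BB k \<beta> y"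
      unfolding kn using BB_convex[OF adm' x y] u v uv by auto
    finally have c: "A (x + v *\<^sub>R (y - x)) \<le> (1 - v) * BB k \<beta> x + v * BB k \<beta> y" .
    have ux: "u = 1 - v" using uv by simp
    show "A (u *\<^sub>R x + v *\<^sub>R y) \<le> u * A x + v * A y"
      unfolding e using c A[OF x] A[OF y] ux by simp
  qed
  moreover have "1 / real (CARD('n) + 1) \<le> A w \<and> maxcoord w \<le> A w \<and> A w \<le> 1" if w: "w \<in> unit_simplex" for w
  proof -
    have Aw: "A w = BB k \<beta> w" by (rule A[OF w])
    have up: "A w \<le> 1"
      using BB_mono[OF w, of k \<beta> "\<lambda>_. 1"] b01 BB_one[of k w] Aw by simp
    have l1: "w$i \<le> A w" for i using lower_vx[OF adm' w, of i] Aw kn by simp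
    have l2: "wlast w \<le> A w" using lower_wlast[OF adm' w] Aw kn by simp
    have mc: "maxcoord w \<le> A w"
      unfolding maxcoord_def using l1 l2 by (auto intro!: Max.boundedI)
    have ge: "w$i \<le> maxcoord w" for i
      unfolding maxcoord_def by (rule max.coboundedI1, rule Max_ge) auto
    have ge2: "wlast w \<le> maxcoord w" unfolding maxcoord_def by simp
    have "1 = (\<Sum>i\<in>UNIV. w$i) + wlast w" by (simp add: sum_w_wlast)
    also have "\<dots> \<le> (\<Sum>i::'n\<in>UNIV. maxcoord w) + maxcoord w"
    proof (rule add_mono)
      show "(\<Sum>i\<in>UNIV. w$i) \<le> (\<Sum>i::'n\<in>UNIV. maxcoord w)" by (rule sum_mono) (rule ge)
    qed (rule ge2)
    also have "\<dots> = real (CARD('n) + 1) * maxcoord w" by (simp add: algebra_simps)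
    finally have "1 / real (CARD('n) + 1) \<le> maxcoord w"
      by (simp add: field_simps)
    then show ?thesis using mc up by simp
  qed
  ultimately show "A \<in> pickA" by (simp add: pickA_def)
qed

theorem mainTheorem6:
  fixes k :: nat
  assumes "k \<ge> 2"
  shows "(Ak k :: (real^'n::finite \<Rightarrow> real) set) \<subseteq> Ak (Suc k) \<and> (Ak k :: (real^'n \<Rightarrow> real) set) \<subseteq> pickA"
  using Ak_mono[OF assms] Ak_sub_pickA[OF assms] by blast

end
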